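(* Let $\{\alpha_t\}_{t\in\mathbb Z_{\ge0}}$ be a sequence of continuous, weakly monotonically increasing functions $\alpha_t\colon\mathbb R_{\ge0}\to\mathbb R_{\ge0}$ with $\alpha_t^{-1}(0)=\{0\}$ for all $t$. Then there is a non-negative $\alpha\in C^\infty(\mathbb R)$ with $\alpha^{-1}(0)=\mathbb R_{\le0}$ such that for all $t,k\in\mathbb Z_{\ge0}$, $\lim_{x\to0,\,x>0}\frac{\alpha(x)}{(\alpha_t(x))^k}=0$. *)

theory Defs
  imports "HOL-Analysis.Analysis"
begin

definition smooth_real :: "(real \<Rightarrow> real) \<Rightarrow> bool" where
  "smooth_real f \<longleftrightarrow> (\<exists>D :: nat \<Rightarrow> real \<Rightarrow> real. D 0 = f \<and>
     (\<forall>n x. (D n has_real_derivative D (Suc n) x) (at x)))"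

end

theory Submission imports Defs "HOL-Computational_Algebra.Polynomial" begin

lemma poly_exp_at_top: "((\<lambda>y. poly q y * exp (- y)) \<longlongrightarrow> (0::real)) at_top"
proof -
  have "((\<lambda>y. \<Sum>i\<le>degree q. coeff q i * (y ^ i / exp y)) \<longlongrightarrow> (\<Sum>i\<le>degree q. coeff q i * 0)) at_top"
    by (intro tendsto_sum tendsto_mult tendsto_const tendsto_power_div_exp_0)
  moreover have "(\<lambda>y. \<Sum>i\<le>degree q. coeff q i * (y ^ i / exp y)) = (\<lambda>y. poly q y * exp (- y))"
    by (auto simp: poly_altdef sum_distrib_right exp_minus field_simps sum_divide_distrib)
  ultimately show ?thesis by simp
qed

lemma poly_exp_at_right: "((\<lambda>h. poly q (1/h) * exp (- (1/h))) \<longlongrightarrow> (0::real)) (at_right 0)"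
proof -
  have "((\<lambda>h. poly q (inverse h) * exp (- (inverse h))) \<longlongrightarrow> (0::real)) (at_right 0)"
    by (rule filterlim_compose[OF poly_exp_at_top filterlim_inverse_at_top_right])
  thus ?thesis by (simp add: inverse_eq_divide)
qed

fun P :: "nat \<Rightarrow> real poly" where
  "P 0 = 1"
| "P (Suc j) = [:0,0,1:] * (P j - pderiv (P j))"

definition E :: "nat \<Rightarrow> real \<Rightarrow> real" where
  "E j x = (if x > 0 then poly (P j) (1/x) * exp (- (1/x)) else 0)"

lemma E_deriv: "(E j has_real_derivative E (Suc j) x) (at x)"
proof -
  consider "x > 0" | "x < 0" | "x = 0" by linarith
  then show ?thesis
  proof cases
    case 1
    have d: "((\<lambda>y. poly (P j) (1/y) * exp (- (1/y))) has_real_derivative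
       poly (pderiv (P j)) (1/x) * (- (1/x^2)) * exp (- (1/x)) + poly (P j) (1/x) * (exp (- (1/x)) * (1/x^2))) (at x)"
      using 1 by (auto intro!: derivative_eq_intros simp: power2_eq_square)
    have eq: "poly (pderiv (P j)) (1/x) * (- (1/x^2)) * exp (- (1/x)) + poly (P j) (1/x) * (exp (- (1/x)) * (1/x^2))
       = E (Suc j) x"
      using 1 by (simp add: E_def algebra_simps power2_eq_square)
    show ?thesis
      by (rule has_field_derivative_transform_within_open[OF d[unfolded eq], where S="{0<..}"]) (use 1 in \<open>auto simp: E_def\<close>)
  next
    case 2
    have d: "((\<lambda>y. 0) has_real_derivative 0) (at x)" by simp
    show ?thesis
      using has_field_derivative_transform_within_open[OF d, where S="{..<0}" and g="E j"] 2 by (auto simp: E_def)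
  next
    case 3
    have r: "((\<lambda>h. (E j h - E j 0) / (h - 0)) \<longlongrightarrow> 0) (at_right 0)"
    proof -
      have "((\<lambda>h. poly (pCons 0 (P j)) (1/h) * exp (- (1/h))) \<longlongrightarrow> (0::real)) (at_right 0)"
        by (rule poly_exp_at_right)
      moreover have "eventually (\<lambda>h. poly (pCons 0 (P j)) (1/h) * exp (- (1/h)) = (E j h - E j 0) / (h - 0)) (at_right 0)"
        unfolding eventually_at_right_field by (intro exI[of _ 1]) (auto simp: E_def)
      ultimately show ?thesis by (rule Lim_transform_eventually)
    qed
    have l: "((\<lambda>h. (E j h - E j 0) / (h - 0)) \<longlongrightarrow> 0) (at_left 0)"
    proof -
      have "eventually (\<lambda>h. 0 = (E j h - E j 0) / (h - 0)) (at_left 0)"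
        unfolding eventually_at_left_field by (intro exI[of _ "-1"]) (auto simp: E_def)
      then show ?thesis by (rule Lim_transform_eventually[OF tendsto_const])
    qed
    have "E (Suc j) 0 = 0" by (simp add: E_def)
    with filterlim_split_at[OF l r] 3 show ?thesis
      by (simp add: has_field_derivative_iff)
  qed
qed

lemma E_chain: "((\<lambda>y. c * E j (y - a)) has_real_derivative c * E (Suc j) (x - a)) (at x)"
proof -
  have "((\<lambda>y. E j (y - a)) has_real_derivative E (Suc j) (x - a) * 1) (at x)"
    by (rule DERIV_chain2[OF E_deriv]) (auto intro!: derivative_eq_intros)
  then show ?thesis by (auto intro: DERIV_cmult)
qed

lemma E_bounded: "\<exists>B. \<forall>z\<in>{l..u}. \<bar>E j z\<bar> \<le> B"
proof -
  have "continuous_on {l..u} (E j)"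
    by (intro continuous_at_imp_continuous_on ballI DERIV_isCont[OF E_deriv])
  then have "bounded (E j ` {l..u})"
    by (intro compact_imp_bounded compact_continuous_image) auto
  then show ?thesis by (auto simp: bounded_iff)
qed

lemma series_deriv:
  fixes c a :: "nat \<Rightarrow> real"
  assumes c: "summable c" "\<And>n. c n \<ge> 0" and a: "\<And>n. a n \<in> {0..1}"
  shows "((\<lambda>x. \<Sum>n. c n * E j (x - a n)) has_real_derivative (\<Sum>n. c n * E (Suc j) (x - a n))) (at x)"
proof -
  define S where "S = {x-1<..<x+1}"
  obtain B where B: "\<forall>z\<in>{x-2..x+1}. \<bar>E j z\<bar> \<le> B" using E_bounded by blast
  obtain B' where B': "\<forall>z\<in>{x-2..x+1}. \<bar>E (Suc j) z\<bar> \<le> B'" using E_bounded by blast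
  have inK: "y - a n \<in> {x-2..x+1}" if "y \<in> S" for y n
    using a[of n] that by (auto simp: S_def)
  show ?thesis
  proof (rule has_field_derivative_series'(2)[where S=S and x0=x])
    show "convex S" by (simp add: S_def)
    show "((\<lambda>y. c n * E j (y - a n)) has_real_derivative c n * E (Suc j) (y - a n)) (at y within S)"
      if "y \<in> S" for n y
      by (rule has_field_derivative_at_within[OF E_chain])
    show "uniformly_convergent_on S (\<lambda>n y. \<Sum>i<n. c i * E (Suc j) (y - a i))"
    proof (rule Weierstrass_m_test'[where M="\<lambda>n. c n * B'"])
      show "norm (c n * E (Suc j) (y - a n)) \<le> c n * B'" if "y \<in> S" for n y
        using B' inK[OF that, of n] c(2)[of n] by (auto simp: abs_mult intro: mult_left_mono)
      show "summable (\<lambda>n. c n * B')" by (rule summable_mult2[OF c(1)])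
    qed
    show "x \<in> S" by (simp add: S_def)
    show "x \<in> interior S" by (simp add: S_def)
    show "summable (\<lambda>n. c n * E j (x - a n))"
    proof (rule summable_comparison_test[where g="\<lambda>n. c n * B"])
      have "x \<in> S" by (simp add: S_def)
      then show "\<exists>N. \<forall>n\<ge>N. norm (c n * E j (x - a n)) \<le> c n * B"
        using B inK c(2) by (auto simp: abs_mult intro!: mult_left_mono)
      show "summable (\<lambda>n. c n * B)" by (rule summable_mult2[OF c(1)])
    qed
  qed
qed

lemma series_smooth:
  fixes c a :: "nat \<Rightarrow> real"
  assumes c: "summable c" "\<And>n. c n \<ge> 0" and a: "\<And>n. a n \<in> {0..1}"
  shows "smooth_real (\<lambda>x. \<Sum>n. c n * E 0 (x - a n))"
  unfolding smooth_real_def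
  by (rule exI[of _ "\<lambda>j x. \<Sum>n. c n * E j (x - a n)"]) (auto intro: series_deriv[OF c a])

lemma E0_pos: "z > 0 \<Longrightarrow> E 0 z > 0" by (simp add: E_def)
lemma E0_nonneg: "E 0 z \<ge> 0" by (simp add: E_def)
lemma E0_le1: "E 0 z \<le> 1" by (simp add: E_def)
lemma E0_zero: "z \<le> 0 \<Longrightarrow> E 0 z = 0" by (simp add: E_def)

theorem propositionA1:
  fixes \<alpha>s :: "nat \<Rightarrow> real \<Rightarrow> real"
  assumes cont: "\<And>t. continuous_on {0..} (\<alpha>s t)"
    and mono: "\<And>t. mono_on {0..} (\<alpha>s t)"
    and nonneg: "\<And>t x. x \<ge> 0 \<Longrightarrow> \<alpha>s t x \<ge> 0"
    and zero: "\<And>t. {x. x \<ge> 0 \<and> \<alpha>s t x = 0} = {0}"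
  shows "\<exists>\<alpha> :: real \<Rightarrow> real. smooth_real \<alpha> \<and> (\<forall>x. \<alpha> x \<ge> 0) \<and>
           {x. \<alpha> x = 0} = {..0} \<and>
           (\<forall>t k::nat. ((\<lambda>x. \<alpha> x / (\<alpha>s t x) ^ k) \<longlongrightarrow> 0) (at_right 0))"
proof -
  define a :: "nat \<Rightarrow> real" where "a n = 1 / (real n + 1)" for n
  define g :: "nat \<Rightarrow> real" where
    "g n = Min ((\<lambda>(t,k). \<alpha>s t (a n) ^ k) ` ({..n}\<times>{..n})) / (real n + 1)" for n
  define c :: "nat \<Rightarrow> real" where "c n = g n / 2 ^ n" for n
  define \<alpha> where "\<alpha> x = (\<Sum>n. c n * E 0 (x - a n))" for x
  have apos: "a n > 0" "a n \<le> 1" for n by (auto simp: a_def)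
  have \<alpha>pos: "\<alpha>s t x > 0" if "x > 0" for t x
  proof -
    have "\<alpha>s t x \<noteq> 0"
    proof
      assume "\<alpha>s t x = 0"
      then have "x \<in> {x. x \<ge> 0 \<and> \<alpha>s t x = 0}" using that by simp
      then have "x \<in> {0}" by (simp only: zero)
      then show False using that by simp
    qed
    with nonneg[of x t] that show ?thesis by auto
  qed
  have gpos: "g n > 0" for n
  proof -
    have "Min ((\<lambda>(t,k). \<alpha>s t (a n) ^ k) ` ({..n}\<times>{..n})) > 0"
      using \<alpha>pos[OF apos(1)] by (subst Min_gr_iff) auto
    then show ?thesis by (simp add: g_def)
  qed
  have g_le: "g m \<le> \<alpha>s t (a M) ^ k / (real M + 1)" if "t \<le> M" "k \<le> M" "M \<le> m" for t k M m
  proof -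
    have "Min ((\<lambda>(t,k). \<alpha>s t (a m) ^ k) ` ({..m}\<times>{..m})) \<le> \<alpha>s t (a m) ^ k"
      using that by (intro Min_le) auto
    then have h1: "g m \<le> \<alpha>s t (a m) ^ k / (real m + 1)"
      by (simp add: g_def divide_right_mono)
    have am: "a m \<le> a M" using that by (simp add: a_def frac_le)
    have "\<alpha>s t (a m) \<le> \<alpha>s t (a M)"
      by (rule mono_onD[OF mono[of t]]) (use apos am in \<open>auto simp: less_imp_le\<close>)
    then have h2: "\<alpha>s t (a m) ^ k / (real m + 1) \<le> \<alpha>s t (a M) ^ k / (real M + 1)"
      using that nonneg[of "a m" t] apos[of m] apos[of M]
      by (intro frac_le power_mono zero_le_power) auto
    show ?thesis using h1 h2 by linarith
  qed
  have c_nonneg: "c n \<ge> 0" for n using gpos[of n] by (simp add: c_def)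
  have c_le: "c n \<le> (1/2) ^ n" for n
    using g_le[of 0 0 0 n] by (simp add: c_def power_one_over divide_right_mono)
  have c_sum: "summable c"
    by (rule summable_comparison_test[OF _ summable_geometric[of "1/2"]]) (use c_nonneg c_le in auto)
  have term_sum: "summable (\<lambda>n. c n * E 0 (x - a n))" for x
    by (rule summable_comparison_test[OF _ c_sum])
       (use c_nonneg E0_nonneg E0_le1 in \<open>auto intro!: mult_left_le exI[of _ 0]\<close>)
  have term_nonneg: "c n * E 0 (x - a n) \<ge> 0" for x n using c_nonneg E0_nonneg by simp
  have smooth: "smooth_real \<alpha>"
    unfolding \<alpha>_def[abs_def] by (rule series_smooth[OF c_sum c_nonneg]) (use apos in \<open>auto simp: less_imp_le\<close>)
  have \<alpha>nonneg: "\<alpha> x \<ge> 0" for x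
    unfolding \<alpha>_def by (rule suminf_nonneg[OF term_sum term_nonneg])
  have zset: "{x. \<alpha> x = 0} = {..0}"
  proof safe
    fix x assume "\<alpha> x = 0"
    show "x \<le> 0"
    proof (rule ccontr)
      assume "\<not> x \<le> 0"
      then have x: "x > 0" by simp
      obtain n where n: "1 / x < real n" using reals_Archimedean2 by blast
      then have "a n < x" using x by (simp add: a_def field_simps)
      then have "c n * E 0 (x - a n) > 0" using gpos[of n] E0_pos[of "x - a n"] by (simp add: c_def)
      then have "\<alpha> x > 0" unfolding \<alpha>_def by (rule suminf_pos2[OF term_sum term_nonneg])
      with \<open>\<alpha> x = 0\<close> show False by simp
    qed
  next
    fix x :: real assume "x \<le> 0"
    have "\<forall>n. c n * E 0 (x - a n) = 0"
    proof
      fix n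
      have "x - a n \<le> 0" using apos(1)[of n] \<open>x \<le> 0\<close> by linarith
      then show "c n * E 0 (x - a n) = 0" by (simp add: E0_zero)
    qed
    then have "(\<lambda>n. c n * E 0 (x - a n)) = (\<lambda>n. 0)" by (intro ext) blast
    then show "\<alpha> x = 0" unfolding \<alpha>_def by simp
  qed
  have lim: "((\<lambda>x. \<alpha> x / (\<alpha>s t x) ^ k) \<longlongrightarrow> 0) (at_right 0)" for t k
  proof (rule tendstoI)
    fix e :: real assume e: "e > 0"
    obtain N0 where N0: "2 / e < real N0" using reals_Archimedean2 by blast
    define N where "N = max N0 (max t (max k 1))"
    have N: "t \<le> N" "k \<le> N" "1 \<le> N" "2 / e < real N" using N0 by (auto simp: N_def)
    have "2 / (real N + 1) < e" using N(4) e by (simp add: field_simps)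
    show "eventually (\<lambda>x. dist (\<alpha> x / (\<alpha>s t x) ^ k) 0 < e) (at_right 0)"
      unfolding eventually_at_right_field
    proof (intro exI[of _ "1 / real N"] conjI allI impI)
      show "0 < 1 / real N" using N by simp
      fix x :: real assume x: "0 < x" "x < 1 / real N"
      define M where "M = nat \<lfloor>1 / x\<rfloor>"
      have "real N < 1 / x" using x N by (simp add: field_simps)
      have fl: "real M = of_int \<lfloor>1/x\<rfloor>" using x by (simp add: M_def)
      have M1: "real M \<le> 1 / x" "1 / x < real M + 1"
        using fl floor_correct[of "1/x"] by linarith+
      have "real N < real M + 1" using M1 \<open>real N < 1 / x\<close> by linarith
      then have MN: "N \<le> M" by linarith
      have aM: "a M < x" using M1 x by (simp add: a_def field_simps)
      define B where "B = \<alpha>s t (a M) ^ k / (real M + 1)"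
      have \<alpha>M: "\<alpha>s t (a M) > 0" using \<alpha>pos[OF apos(1)[of M]] .
      have termle: "c m * E 0 (x - a m) \<le> B * (1/2) ^ m" for m
      proof (cases "m < M")
        case True
        have "a m \<ge> 1 / real M" unfolding a_def using True by (intro divide_left_mono) auto
        moreover have "1 / real M \<ge> x" using M1 x True by (simp add: field_simps)
        ultimately have "E 0 (x - a m) = 0" by (intro E0_zero) auto
        then show ?thesis using \<alpha>M by (simp add: B_def)
      next
        case False
        have "c m \<le> B * (1/2) ^ m"
        proof -
          have "g m \<le> B" using g_le[of t M k m] N MN False by (simp add: B_def)
          moreover have "c m = g m * (1/2) ^ m" by (simp add: c_def power_one_over)
          ultimately show ?thesis by (simp add: mult_right_mono)
        qed
        moreover have "c m * E 0 (x - a m) \<le> c m" by (rule mult_left_le[OF E0_le1 c_nonneg])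
        ultimately show ?thesis by linarith
      qed
      have "\<alpha> x \<le> (\<Sum>m. B * (1/2) ^ m)" unfolding \<alpha>_def
        by (rule suminf_le[OF termle term_sum summable_mult[OF summable_geometric]]) simp
      also have "\<dots> = 2 * B" by (simp add: suminf_mult suminf_geometric)
      finally have \<alpha>le: "\<alpha> x \<le> 2 * B" .
      have "\<alpha>s t (a M) \<le> \<alpha>s t x"
        by (rule mono_onD[OF mono[of t]]) (use apos aM x in \<open>auto simp: less_imp_le\<close>)
      then have pw: "\<alpha>s t (a M) ^ k \<le> \<alpha>s t x ^ k" using \<alpha>M by (intro power_mono) auto
      have pwpos: "\<alpha>s t (a M) ^ k > 0" using \<alpha>M by simp
      have Bnn: "0 \<le> 2 * B" using pwpos by (simp add: B_def)
      have pxpos: "\<alpha>s t x ^ k > 0" using pw pwpos by linarith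
      have "\<alpha> x / \<alpha>s t x ^ k \<le> 2 * B / \<alpha>s t x ^ k"
        using \<alpha>le pxpos by (simp add: divide_right_mono)
      also have "\<dots> \<le> 2 * B / \<alpha>s t (a M) ^ k"
        by (rule divide_left_mono[OF pw Bnn]) (use pxpos pwpos in simp)
      also have "\<dots> = 2 / (real M + 1)" using \<alpha>M by (simp add: B_def)
      also have "\<dots> \<le> 2 / (real N + 1)" using MN by (simp add: frac_le)
      also have "\<dots> < e" by fact
      finally have "\<alpha> x / \<alpha>s t x ^ k < e" .
      moreover have "\<alpha> x / \<alpha>s t x ^ k \<ge> 0" using \<alpha>nonneg nonneg x by simp
      ultimately show "dist (\<alpha> x / (\<alpha>s t x) ^ k) 0 < e" by simp
    qed
  qed
  show ?thesis using smooth \<alpha>nonneg zset lim by blast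
qed

end
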